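(* Let $u,v\in\{0,1,2\}^*$ with $\theta(u),\theta(v)\in\{0,1,\dots,7\}$. If $\theta(u)=\theta(v)$, then $\lambda_{ua}=\lambda_{va}$ and $s_{ua}=s_{va}$ for every $a\in\{0,1,2\}$.
   Context: Fibonacci numbers: $F_0=1$, $F_1=2$, $F_n=F_{n-1}+F_{n-2}$ for $n\ge2$ (so $F_2=3$). For a word $w=w_{k-1}\cdots w_0$ over $\{0,1,2\}$ (digits indexed from the right), $\mathrm{val}_{\mathcal{F}}(w)=\sum_{i=0}^{k-1}w_iF_i$. $\mathcal{S}=\{000,001,010,100,101\}$. Let $u\mapsto w_u\in\{0,1\}^*$ (length-preserving) and $u\mapsto s_u\in\mathcal{S}$ be the unique maps on $\{0,1,2\}^*$ such that $w_u$ is a prefix of $w_{ua}$ for every letter $a\in\{0,1,2\}$ and $\mathrm{val}_{\mathcal{F}}(u)=\mathrm{val}_{\mathcal{F}}(w_us_u)$ for all $u$; and let $\lambda_{ua}\in\{0,1\}$ be defined by $w_{ua}=w_u\lambda_{ua}$. Define $\theta:\{0,1,2\}^*\to\mathbb{Z}$ by $\theta(\varepsilon)=0$ and $\theta(ua)=\mathrm{val}_{\mathcal{F}}(s_u)+\mathrm{val}_{\mathcal{F}}(s_{ua})-F_2\lambda_{ua}+a$ for $u\in\{0,1,2\}^*$, $a\in\{0,1,2\}$. *)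

theory Defs
  imports Main "HOL-Library.Sublist"
begin

fun fibF :: "nat \<Rightarrow> nat" where
  "fibF 0 = 1"
| "fibF (Suc 0) = 2"
| "fibF (Suc (Suc n)) = fibF (Suc n) + fibF n"

text \<open>Words are lists written left to right, w = w_{k-1} ... w_0, so the
  digit w_i is the i-th element of the reversed list.\<close>
definition valF :: "nat list \<Rightarrow> nat" where
  "valF w = (\<Sum>i<length w. rev w ! i * fibF i)"

definition words3 :: "nat list set" where
  "words3 = {u. set u \<subseteq> {0,1,2}}"

definition Sset :: "nat list set" where
  "Sset = {[0,0,0],[0,0,1],[0,1,0],[1,0,0],[1,0,1]}"

definition ws_spec :: "(nat list \<Rightarrow> nat list) \<Rightarrow> (nat list \<Rightarrow> nat list) \<Rightarrow> bool" where
  "ws_spec W Sm \<longleftrightarrow>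
     (\<forall>u\<in>words3. set (W u) \<subseteq> {0,1} \<and> length (W u) = length u \<and> Sm u \<in> Sset
        \<and> valF u = valF (W u @ Sm u)
        \<and> (\<forall>a\<in>{0,1,2}. prefix (W u) (W (u @ [a]))))"

text \<open>The unique such maps (fixed to default values outside {0,1,2}^* so that
  the description is unique).\<close>
definition WS :: "(nat list \<Rightarrow> nat list) \<times> (nat list \<Rightarrow> nat list)" where
  "WS = (THE p. ws_spec (fst p) (snd p)
              \<and> (\<forall>u. u \<notin> words3 \<longrightarrow> fst p u = [] \<and> snd p u = [0,0,0]))"

definition wmap :: "nat list \<Rightarrow> nat list" where "wmap = fst WS"
definition smap :: "nat list \<Rightarrow> nat list" where "smap = snd WS"

definition lam :: "nat list \<Rightarrow> nat" where
  "lam u = last (wmap u)"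

definition theta :: "nat list \<Rightarrow> int" where
  "theta u = (if u = [] then 0 else
     int (valF (smap (butlast u))) + int (valF (smap u))
       - int (fibF 2) * int (lam u) + int (last u))"

end

theory Submission
  imports Defs
begin

definition V :: "nat \<Rightarrow> nat list \<Rightarrow> nat" where
  "V k w = (\<Sum>i<length w. rev w ! i * fibF (i + k))"

lemma V_Nil[simp]: "V k [] = 0" by (simp add: V_def)

lemma V_snoc: "V k (w @ [a]) = a * fibF k + V (Suc k) w"
  unfolding V_def by (simp del: sum.lessThan_Suc add: sum.lessThan_Suc_shift)

lemma V_rec: "V (Suc (Suc k)) w = V (Suc k) w + V k w"
  unfolding V_def by (simp add: sum.distrib[symmetric] algebra_simps)

lemma V_append: "V k (w @ ys) = V (k + length ys) w + V k ys"
proof (induction ys arbitrary: k rule: rev_induct)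
  case Nil then show ?case by simp
next
  case (snoc y ys)
  have "V k (w @ ys @ [y]) = y * fibF k + V (Suc k) (w @ ys)"
    using V_snoc[of k "w @ ys" y] by simp
  also have "\<dots> = y * fibF k + V (Suc k + length ys) w + V (Suc k) ys"
    using snoc by simp
  finally show ?case by (simp add: V_snoc)
qed

lemma valF_V: "valF w = V 0 w" by (simp add: valF_def V_def)

lemma fib_vals: "fibF 0 = 1" "fibF 1 = 2" "fibF 2 = 3" "fibF 3 = 5" "fibF 4 = 8" "fibF 5 = 13"
  by (simp_all add: eval_nat_numeral)

lemma V_snoc': "V k (w @ [a]) = a * fibF k + V (k + 1) w"
  using V_snoc by simp

lemma V3: "V 0 [x,y,z] = z + 2*y + 3*x"
proof -
  have 1: "V 0 [x,y,z] = z + V 1 [x,y]" using V_snoc'[of 0 "[x,y]" z] by (simp add: fib_vals)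
  have 2: "V 1 [x,y] = 2*y + V 2 [x]" using V_snoc'[of 1 "[x]" y] by (simp add: fib_vals(1,2) numeral_2_eq_2)
  have 3: "V 2 [x] = 3*x" using V_snoc'[of 2 "[]" x] by (simp add: fib_vals)
  show ?thesis using 1 2 3 by simp
qed

definition enc :: "nat \<Rightarrow> nat list" where
  "enc n = [[0,0,0],[0,0,1],[0,1,0],[1,0,0],[1,0,1]] ! n"

lemma enc_cases: "(n::nat) \<le> 4 \<Longrightarrow> n = 0 \<or> n = 1 \<or> n = 2 \<or> n = 3 \<or> n = 4" by auto

lemma enc_val: "n \<le> 4 \<Longrightarrow> V 0 (enc n) = n"
  by (drule enc_cases) (auto simp: V3 enc_def)

lemma enc_len: "n \<le> 4 \<Longrightarrow> length (enc n) = 3"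
  by (drule enc_cases) (auto simp: enc_def)

lemma enc_S: "n \<le> 4 \<Longrightarrow> enc n \<in> Sset"
  by (drule enc_cases) (auto simp: enc_def Sset_def)

lemma Sset_enc: "s \<in> Sset \<Longrightarrow> \<exists>m\<le>4. s = enc m"
  unfolding Sset_def
  apply (elim insertE)
  apply (rule exI[of _ 0], simp add: enc_def)
  apply (rule exI[of _ 1], simp add: enc_def)
  apply (rule exI[of _ 2], simp add: enc_def)
  apply (rule exI[of _ 3], simp add: enc_def)
  apply (rule exI[of _ 4], simp add: enc_def)
  by simp

fun step :: "nat list \<times> nat \<times> int \<Rightarrow> nat \<Rightarrow> nat list \<times> nat \<times> int" where
  "step (w, sv, th) a = (let t = th + int a; l = (if 5 \<le> t then 1 else 0::nat);
      sv' = nat (t - 5 * int l) in (w @ [l], sv', int sv + int sv' + int a - 3 * int l))"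

definition run :: "nat list \<Rightarrow> nat list \<times> nat \<times> int" where
  "run u = foldl step ([], 0, 0) u"

lemma run_Nil: "run [] = ([], 0, 0)" by (simp add: run_def)
lemma run_snoc: "run (u @ [a]) = step (run u) a" by (simp add: run_def)

definition R :: "(nat \<times> int) set" where
  "R = {(0,0),(0,1),(1,1),(1,2),(2,3),(2,4),(3,5),(3,6),(4,6),(4,7)}"

lemma R_step: "(sv, th) \<in> R \<Longrightarrow> a \<in> {0,1,2} \<Longrightarrow>
   (fst (snd (step (w, sv, th) a)), snd (snd (step (w, sv, th) a))) \<in> R"
  unfolding R_def
  apply (elim insertE emptyE)
  apply (simp_all add: Let_def)
  done

lemma R_bounds: "(sv, th) \<in> R \<Longrightarrow> 0 \<le> th \<and> th \<le> 7 \<and> sv \<le> 4"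
  by (auto simp: R_def)

lemma words3_snoc: "u @ [a] \<in> words3 \<longleftrightarrow> u \<in> words3 \<and> a \<in> {0,1,2}"
  by (auto simp: words3_def)

lemma inv: "u \<in> words3 \<Longrightarrow> length (fst (run u)) = length u \<and> set (fst (run u)) \<subseteq> {0,1}
   \<and> (fst (snd (run u)), snd (snd (run u))) \<in> R
   \<and> int (V 0 u) = int (V 3 (fst (run u))) + int (fst (snd (run u)))
   \<and> snd (snd (run u)) = int (V 1 u) - int (V 4 (fst (run u)))"
proof (induction u rule: rev_induct)
  case Nil then show ?case by (simp add: run_Nil R_def)
next
  case (snoc a u)
  from snoc.prems have uw: "u \<in> words3" and a: "a \<in> {0,1,2}" by (auto simp: words3_snoc)
  obtain w sv th where r: "run u = (w, sv, th)" by (cases "run u") auto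
  from snoc.IH[OF uw] r have IH: "length w = length u" "set w \<subseteq> {0,1}" "(sv, th) \<in> R"
    "int (V 0 u) = int (V 3 w) + int sv" "th = int (V 1 u) - int (V 4 w)" by auto
  define t where "t = th + int a"
  define l where "l = (if 5 \<le> t then 1 else 0::nat)"
  define sv' where "sv' = nat (t - 5 * int l)"
  have rs: "run (u @ [a]) = (w @ [l], sv', int sv + int sv' + int a - 3 * int l)"
    by (simp add: run_snoc r Let_def t_def l_def sv'_def)
  have Rn: "(sv', int sv + int sv' + int a - 3 * int l) \<in> R"
    using R_step[OF IH(3) a, of w] by (simp add: Let_def t_def l_def sv'_def)
  have t0: "0 \<le> t" using R_bounds[OF IH(3)] by (simp add: t_def)
  have svi: "int sv' = t - 5 * int l" using t0 by (simp add: sv'_def l_def)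
  have e1: "V 0 (u @ [a]) = a + V 1 u" by (simp add: V_snoc fib_vals)
  have e2: "V 3 (w @ [l]) = l * 5 + V 4 w" by (simp add: V_snoc fib_vals eval_nat_numeral)
  have e3: "V 1 (u @ [a]) = a * 2 + V 2 u" by (simp add: V_snoc fib_vals eval_nat_numeral)
  have e4: "V 2 u = V 1 u + V 0 u" using V_rec[of 0 u] by (simp add: eval_nat_numeral)
  have e5: "V 4 (w @ [l]) = l * 8 + V 5 w" by (simp add: V_snoc fib_vals eval_nat_numeral)
  have e6: "V 5 w = V 4 w + V 3 w" using V_rec[of 3 w] by (simp add: eval_nat_numeral)
  have lb: "l \<le> 1" by (simp add: l_def)
  have c4: "int (V 0 (u @ [a])) = int (V 3 (w @ [l])) + int sv'"
    using IH(4,5) svi e1 e2 unfolding t_def by linarith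
  have c5: "int sv + int sv' + int a - 3 * int l = int (V 1 (u @ [a])) - int (V 4 (w @ [l]))"
    using IH(4,5) svi e3 e4 e5 e6 unfolding t_def by linarith
  have l01: "l \<in> {0,1}" using lb by auto
  have c2: "set (w @ [l]) \<subseteq> {0,1}" using IH(2) l01 by simp
  have c1: "length (w @ [l]) = length (u @ [a])" using IH(1) by simp
  show ?case unfolding rs fst_conv snd_conv using c1 c2 Rn c4 c5 by (intro conjI)
qed


definition L :: "int \<Rightarrow> nat \<Rightarrow> nat" where "L th a = (if 5 \<le> th + int a then 1 else 0)"
definition Sv :: "int \<Rightarrow> nat \<Rightarrow> nat" where "Sv th a = nat (th + int a - 5 * int (L th a))"

lemma step_explicit: "step (w, sv, th) a = (w @ [L th a], Sv th a, int sv + int (Sv th a) + int a - 3 * int (L th a))"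
  by (simp add: Let_def L_def Sv_def)

lemma run_snoc': "run u = (w, sv, th) \<Longrightarrow>
   run (u @ [a]) = (w @ [L th a], Sv th a, int sv + int (Sv th a) + int a - 3 * int (L th a))"
  by (simp only: run_snoc step_explicit)

definition Wf :: "nat list \<Rightarrow> nat list" where
  "Wf u = (if u \<in> words3 then fst (run u) else [])"
definition Sf :: "nat list \<Rightarrow> nat list" where
  "Sf u = (if u \<in> words3 then enc (fst (snd (run u))) else [0,0,0])"

lemma valF_enc: "m \<le> 4 \<Longrightarrow> valF (w @ enc m) = V 3 w + m"
  by (simp add: valF_V V_append enc_len enc_val)

lemma spec: "ws_spec Wf Sf"
  unfolding ws_spec_def
proof (intro ballI conjI)
  fix u assume u: "u \<in> words3"
  obtain w sv th where r: "run u = (w, sv, th)" by (cases "run u") auto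
  from inv[OF u] r have I: "length w = length u" "set w \<subseteq> {0,1}" "(sv, th) \<in> R"
    "int (V 0 u) = int (V 3 w) + int sv" by auto
  have sv4: "sv \<le> 4" using R_bounds[OF I(3)] by simp
  have W: "Wf u = w" and S: "Sf u = enc sv" using u r by (simp_all add: Wf_def Sf_def)
  show "set (Wf u) \<subseteq> {0,1}" using W I by simp
  show "length (Wf u) = length u" using W I by simp
  show "Sf u \<in> Sset" using S enc_S[OF sv4] by simp
  show "valF u = valF (Wf u @ Sf u)" using W S I(4) valF_enc[OF sv4, of w] by (simp add: valF_V)
  fix a :: nat assume a: "a \<in> {0,1,2}"
  have ua: "u @ [a] \<in> words3" using u a by (simp add: words3_snoc)
  show "prefix (Wf u) (Wf (u @ [a]))"
    using W ua run_snoc'[OF r, of a] by (simp add: Wf_def)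
qed

lemma uniq: assumes sp: "ws_spec W S" shows "u \<in> words3 \<Longrightarrow> W u = Wf u \<and> S u = Sf u"
proof (induction u rule: rev_induct)
  case Nil
  have h: "length (W []) = 0" "S [] \<in> Sset" "valF [] = valF (W [] @ S [])"
    using sp Nil unfolding ws_spec_def by auto
  obtain m where m: "m \<le> 4" "S [] = enc m" using Sset_enc[OF h(2)] by blast
  have W0: "W [] = []" using h(1) by simp
  have "m = 0" using h(3) m valF_enc[OF m(1), of "[]"] W0 by (simp add: valF_V)
  then show ?case using h(1) m Nil by (simp add: Wf_def Sf_def run_Nil)
next
  case (snoc a u)
  from snoc.prems have u: "u \<in> words3" and a: "a \<in> {0,1,2}" by (auto simp: words3_snoc)
  have IH: "W u = Wf u" "S u = Sf u" using snoc.IH[OF u] by auto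
  obtain w sv th where r: "run u = (w, sv, th)" by (cases "run u") auto
  have Wu: "W u = w" using IH r u by (simp add: Wf_def)
  have hu: "prefix (W u) (W (u @ [a]))" using sp u a unfolding ws_spec_def by auto
  have hua: "set (W (u @ [a])) \<subseteq> {0,1}" "length (W (u @ [a])) = length (u @ [a])"
    "S (u @ [a]) \<in> Sset" "valF (u @ [a]) = valF (W (u @ [a]) @ S (u @ [a]))"
    using sp snoc.prems unfolding ws_spec_def by auto
  from hu obtain zs where zs: "W (u @ [a]) = W u @ zs" by (auto simp: prefix_def)
  from inv[OF u] r have lw: "length w = length u" by simp
  have "length zs = 1" using hua(2) zs Wu lw by simp
  then obtain l' where l': "zs = [l']" by (cases zs) auto
  have l'01: "l' \<le> 1" using hua(1) zs l' by auto
  obtain m where m: "m \<le> 4" "S (u @ [a]) = enc m" using Sset_enc[OF hua(3)] by blast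
  have r2: "run (u @ [a]) = (w @ [L th a], Sv th a, int sv + int (Sv th a) + int a - 3 * int (L th a))"
    using run_snoc'[OF r] .
  from inv[OF snoc.prems] r2 have J: "set (w @ [L th a]) \<subseteq> {0,1}"
    "(Sv th a, int sv + int (Sv th a) + int a - 3 * int (L th a)) \<in> R"
    "int (V 0 (u @ [a])) = int (V 3 (w @ [L th a])) + int (Sv th a)" by auto
  have sv4: "Sv th a \<le> 4" using R_bounds[OF J(2)] by simp
  have L1: "L th a \<le> 1" by (simp add: L_def)
  have e1: "V 0 (u @ [a]) = V 3 (w @ [l']) + m"
    using hua(4) zs Wu l' m valF_enc[OF m(1), of "w @ [l']"] by (simp add: valF_V)
  have e2: "V 3 (w @ [l']) = l' * 5 + V 4 w" "V 3 (w @ [L th a]) = L th a * 5 + V 4 w"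
    by (simp_all add: V_snoc' fib_vals)
  have eq5: "l' * 5 + m = L th a * 5 + Sv th a" using e1 e2 J(3) by linarith
  have eql: "l' = L th a"
  proof (rule ccontr)
    assume ne: "l' \<noteq> L th a"
    then have "(l' = 0 \<and> L th a = 1) \<or> (l' = 1 \<and> L th a = 0)" using l'01 L1 by linarith
    then show False using eq5 m(1) sv4 by auto
  qed
  then have eq: "l' = L th a" "m = Sv th a" using eq5 by simp_all
  show ?case using zs Wu l' eq m snoc.prems r2 by (simp add: Wf_def Sf_def)
qed

lemma WS_eq: "WS = (Wf, Sf)"
  unfolding WS_def
proof (rule the_equality)
  show "ws_spec (fst (Wf, Sf)) (snd (Wf, Sf)) \<and>
    (\<forall>u. u \<notin> words3 \<longrightarrow> fst (Wf, Sf) u = [] \<and> snd (Wf, Sf) u = [0, 0, 0])"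
    using spec by (simp add: Wf_def Sf_def)
next
  fix p assume p: "ws_spec (fst p) (snd p) \<and>
    (\<forall>u. u \<notin> words3 \<longrightarrow> fst p u = [] \<and> snd p u = [0, 0, 0])"
  have "fst p = Wf \<and> snd p = Sf"
  proof (intro conjI ext)
    fix u show "fst p u = Wf u"
      using p uniq[of "fst p" "snd p" u] by (cases "u \<in> words3") (auto simp: Wf_def)
    show "snd p u = Sf u"
      using p uniq[of "fst p" "snd p" u] by (cases "u \<in> words3") (auto simp: Sf_def)
  qed
  then show "p = (Wf, Sf)" by (cases p) auto
qed

lemma wmap_eq: "wmap = Wf" and smap_eq: "smap = Sf"
  by (simp_all add: wmap_def smap_def WS_eq)

lemma theta_run: "u \<in> words3 \<Longrightarrow> theta u = snd (snd (run u))"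
proof (cases u rule: rev_exhaust)
  case Nil then show ?thesis by (simp add: theta_def run_Nil)
next
  case (snoc u' a)
  assume uw: "u \<in> words3"
  with snoc have u': "u' \<in> words3" by (simp add: words3_snoc)
  obtain w sv th where r: "run u' = (w, sv, th)" by (cases "run u'") auto
  note r2 = run_snoc'[OF r, of a]
  from inv[OF u'] r have sv4: "sv \<le> 4" using R_bounds by auto
  from inv[OF uw] r2 snoc have "(Sv th a, int sv + int (Sv th a) + int a - 3 * int (L th a)) \<in> R" by auto
  then have sv4': "Sv th a \<le> 4" using R_bounds by auto
  have "smap u' = enc sv" using u' r by (simp add: smap_eq Sf_def)
  moreover have "smap u = enc (Sv th a)" using uw r2 snoc by (simp add: smap_eq Sf_def)
  moreover have "lam u = L th a" using uw r2 snoc by (simp add: lam_def wmap_eq Wf_def)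
  ultimately show ?thesis using snoc r2 sv4 sv4' enc_val valF_V
    by (simp add: theta_def fib_vals)
qed

theorem lemma5p6:
  assumes "u \<in> words3" and "v \<in> words3"
    and "theta u \<in> {0..7}" and "theta v \<in> {0..7}"
    and "theta u = theta v"
  shows "\<forall>a\<in>{0,1,2::nat}. lam (u @ [a]) = lam (v @ [a]) \<and> smap (u @ [a]) = smap (v @ [a])"
proof
  fix a :: nat assume a: "a \<in> {0,1,2}"
  obtain w sv th where r: "run u = (w, sv, th)" by (cases "run u") auto
  obtain w' sv' th' where r': "run v = (w', sv', th')" by (cases "run v") auto
  have "th = th'" using theta_run[OF assms(1)] theta_run[OF assms(2)] r r' assms(5) by simp
  moreover have "u @ [a] \<in> words3" "v @ [a] \<in> words3" using assms a by (simp_all add: words3_snoc)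
  ultimately show "lam (u @ [a]) = lam (v @ [a]) \<and> smap (u @ [a]) = smap (v @ [a])"
    using run_snoc'[OF r, of a] run_snoc'[OF r', of a]
    by (simp add: lam_def wmap_eq Wf_def smap_eq Sf_def)
qed

end
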